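(* Let $L_x,L_y>0$, $L_{xy}\geq 0$, let $F\in\mathcal{F}(L_x, L_y, L_{xy}, 0, 0)$ with nonempty saddle point set $S^\star$, and let $t>0$. Suppose the gradient descent-ascent method with step length $t$ is linearly convergent for any initial point, i.e. there exists $\alpha\in[0,1)$ such that for every $(x^1,y^1)\in\mathbb{R}^n\times\mathbb{R}^m$ the point $x^{2}=x^1-t\nabla_x F(x^1, y^1)$, $y^{2}=y^1+t\nabla_y F(x^1, y^1)$ satisfies $d_{S^\star}^2((x^2,y^2))\leq \alpha\, d_{S^\star}^2((x^1,y^1))$. Then $F$ has a quadratic gradient growth for some $\mu_F>0$.
   Context: $\mathcal{F}(L_x, L_y, L_{xy}, 0, 0)$ denotes the set of differentiable $F:\mathbb{R}^n\times\mathbb{R}^m\to\mathbb{R}$ with $F(\cdot,y)$ convex for all $y$, $F(x,\cdot)$ concave for all $x$, and for all $x,x_1,x_2,y,y_1,y_2$: $\|\nabla_x F(x_2, y)-\nabla_x F(x_1, y)\|\leq L_x\|x_2-x_1\|$; $\|\nabla_y F(x, y_2)-\nabla_y F(x, y_1)\|\leq L_y\|y_2-y_1\|$; $\|\nabla_x F(x, y_2)-\nabla_x F(x, y_1)\|\leq L_{xy}\|y_2-y_1\|$; $\|\nabla_y F(x_2, y)-\nabla_y F(x_1, y)\|\leq L_{xy}\|x_2-x_1\|$. $S^\star$ is the set of saddle points $(x^\star,y^\star)$, i.e. $F(x^\star, y)\leq F(x^\star, y^\star)\leq F(x, y^\star)$ for all $x,y$; it is closed and convex. $d_{S^\star}(z)=\inf_{w\in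 S^\star}\|z-w\|$. $F$ has quadratic gradient growth with $\mu_F>0$ if for all $(x,y)$: $\langle \nabla_x F(x,y), x-x^\star\rangle-\langle \nabla_y F(x,y), y-y^\star\rangle \geq \mu_F\, d_{S^\star}^2((x,y))$, where $(x^\star,y^\star)$ is the Euclidean projection of $(x,y)$ onto $S^\star$. *)

theory Defs
  imports "HOL-Analysis.Analysis"
begin

definition saddle_set :: "(real^'n \<Rightarrow> real^'m \<Rightarrow> real) \<Rightarrow> ((real^'n) \<times> (real^'m)) set" where
  "saddle_set F = {(xs, ys). \<forall>x y. F xs y \<le> F xs ys \<and> F xs ys \<le> F x ys}"

definition in_class_F ::
  "real \<Rightarrow> real \<Rightarrow> real \<Rightarrow> (real^'n \<Rightarrow> real^'m \<Rightarrow> real)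
   \<Rightarrow> (real^'n \<Rightarrow> real^'m \<Rightarrow> real^'n) \<Rightarrow> (real^'n \<Rightarrow> real^'m \<Rightarrow> real^'m) \<Rightarrow> bool" where
  "in_class_F Lx Ly Lxy F Gx Gy \<longleftrightarrow>
     (\<forall>x y. ((\<lambda>(u, v). F u v) has_derivative (\<lambda>(h, k). Gx x y \<bullet> h + Gy x y \<bullet> k)) (at (x, y))) \<and>
     (\<forall>y. convex_on UNIV (\<lambda>x. F x y)) \<and>
     (\<forall>x. concave_on UNIV (\<lambda>y. F x y)) \<and>
     (\<forall>x1 x2 y. norm (Gx x2 y - Gx x1 y) \<le> Lx * norm (x2 - x1)) \<and>
     (\<forall>x y1 y2. norm (Gy x y2 - Gy x y1) \<le> Ly * norm (y2 - y1)) \<and>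
     (\<forall>x y1 y2. norm (Gx x y2 - Gx x y1) \<le> Lxy * norm (y2 - y1)) \<and>
     (\<forall>x1 x2 y. norm (Gy x2 y - Gy x1 y) \<le> Lxy * norm (x2 - x1))"

definition quadratic_gradient_growth ::
  "(real^'n \<Rightarrow> real^'m \<Rightarrow> real)
   \<Rightarrow> (real^'n \<Rightarrow> real^'m \<Rightarrow> real^'n) \<Rightarrow> (real^'n \<Rightarrow> real^'m \<Rightarrow> real^'m) \<Rightarrow> real \<Rightarrow> bool" where
  "quadratic_gradient_growth F Gx Gy \<mu> \<longleftrightarrow>
     (\<forall>x y. let (xs, ys) = closest_point (saddle_set F) (x, y) in
        Gx x y \<bullet> (x - xs) - Gy x y \<bullet> (y - ys) \<ge> \<mu> * (infdist (x, y) (saddle_set F))\<^sup>2)"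

end

theory Submission
  imports Defs
begin

lemma infdist_closest:
  fixes S :: "('a::{real_inner,heine_borel}) set"
  assumes "closed S" "S \<noteq> {}"
  shows "infdist z S = dist z (closest_point S z)"
proof (rule antisym)
  show "infdist z S \<le> dist z (closest_point S z)"
    by (rule infdist_le[OF closest_point_in_set[OF assms]])
  show "dist z (closest_point S z) \<le> infdist z S"
    unfolding infdist_notempty[OF assms(2)]
    by (rule cINF_greatest[OF assms(2)]) (rule closest_point_le[OF assms(1)])
qed

lemma saddle_closed:
  fixes F :: "real^'n \<Rightarrow> real^'m \<Rightarrow> real"
  assumes c: "continuous_on UNIV (\<lambda>p. F (fst p) (snd p))"
  shows "closed (saddle_set F)"
proof -
  have c1: "continuous_on UNIV (\<lambda>p::(real^'n)\<times>(real^'m). F (fst p) y)" for y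
  proof -
    have "continuous_on UNIV ((\<lambda>p. F (fst p) (snd p)) \<circ> (\<lambda>p::(real^'n)\<times>(real^'m). (fst p, y)))"
      by (rule continuous_on_compose) (auto intro!: continuous_intros continuous_on_subset[OF c])
    thus ?thesis by (simp add: o_def)
  qed
  have c2: "continuous_on UNIV (\<lambda>p::(real^'n)\<times>(real^'m). F x (snd p))" for x
  proof -
    have "continuous_on UNIV ((\<lambda>p. F (fst p) (snd p)) \<circ> (\<lambda>p::(real^'n)\<times>(real^'m). (x, snd p)))"
      by (rule continuous_on_compose) (auto intro!: continuous_intros continuous_on_subset[OF c])
    thus ?thesis by (simp add: o_def)
  qed
  have eq: "saddle_set F = (\<Inter>y. {p. F (fst p) y \<le> F (fst p) (snd p)}) \<inter> (\<Inter>x. {p. F (fst p) (snd p) \<le> F x (snd p)})"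
    unfolding saddle_set_def by auto
  show ?thesis unfolding eq
    by (intro closed_Int closed_INT ballI closed_Collect_le c1 c2 c continuous_on_const)
qed

lemma sublevel_convex:
  fixes f :: "'a::real_vector \<Rightarrow> real"
  assumes "convex_on UNIV f"
  shows "convex {x. f x \<le> c}"
  unfolding convex_def
proof (intro ballI allI impI)
  fix x y :: 'a and u v :: real
  assume x: "x \<in> {x. f x \<le> c}" and y: "y \<in> {x. f x \<le> c}" and u: "0 \<le> u" and v: "0 \<le> v" and uv: "u + v = 1"
  have "f (u *\<^sub>R x + v *\<^sub>R y) \<le> u * f x + v * f y"
    using assms u v uv unfolding convex_on_def by auto
  also have "\<dots> \<le> u * c + v * c"
    using x y u v by (intro add_mono mult_left_mono) auto
  also have "\<dots> = c" using uv by (metis distrib_left mult.commute mult_1)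
  finally show "u *\<^sub>R x + v *\<^sub>R y \<in> {x. f x \<le> c}" by simp
qed

lemma superlevel_convex:
  fixes f :: "'a::real_vector \<Rightarrow> real"
  assumes "concave_on UNIV f"
  shows "convex {x. c \<le> f x}"
proof -
  have "convex {x. - f x \<le> - c}"
    by (rule sublevel_convex) (use assms in \<open>simp add: concave_on_def\<close>)
  thus ?thesis by simp
qed

lemma saddle_convex:
  fixes F :: "real^'n \<Rightarrow> real^'m \<Rightarrow> real"
  assumes cx: "\<And>y. convex_on UNIV (\<lambda>x. F x y)" and cc: "\<And>x. concave_on UNIV (\<lambda>y. F x y)"
    and ne: "saddle_set F \<noteq> {}"
  shows "convex (saddle_set F)"
proof -
  obtain x0 y0 where p0: "(x0, y0) \<in> saddle_set F" using ne by auto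
  define v where "v = F x0 y0"
  have val: "F a b = v" if "(a, b) \<in> saddle_set F" for a b
  proof -
    have h1: "\<forall>x y. F a y \<le> F a b \<and> F a b \<le> F x b" using that unfolding saddle_set_def by auto
    have h0: "\<forall>x y. F x0 y \<le> F x0 y0 \<and> F x0 y0 \<le> F x y0" using p0 unfolding saddle_set_def by auto
    have "F a b \<le> F x0 b" using h1 by blast
    also have "\<dots> \<le> F x0 y0" using h0 by blast
    also have "\<dots> \<le> F a y0" using h0 by blast
    also have "\<dots> \<le> F a b" using h1 by blast
    finally have "F a b \<le> F x0 y0" "F x0 y0 \<le> F a b" 
      using h0 h1 by (meson order_trans)+
    thus ?thesis unfolding v_def by simp
  qed
  have eq: "saddle_set F = (\<Inter>y. {x. F x y \<le> v}) \<times> (\<Inter>x. {y. v \<le> F x y})"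
  proof (rule set_eqI, clarify)
    fix a b
    show "((a, b) \<in> saddle_set F) = ((a, b) \<in> (\<Inter>y. {x. F x y \<le> v}) \<times> (\<Inter>x. {y. v \<le> F x y}))"
    proof
      assume h: "(a, b) \<in> saddle_set F"
      thus "(a, b) \<in> (\<Inter>y. {x. F x y \<le> v}) \<times> (\<Inter>x. {y. v \<le> F x y})"
        using val[OF h] unfolding saddle_set_def by auto
    next
      assume "(a, b) \<in> (\<Inter>y. {x. F x y \<le> v}) \<times> (\<Inter>x. {y. v \<le> F x y})"
      hence h1: "\<And>y. F a y \<le> v" and h2: "\<And>x. v \<le> F x b" by auto
      have "F a b = v" using h1[of b] h2[of a] by simp
      thus "(a, b) \<in> saddle_set F" unfolding saddle_set_def using h1 h2 by auto
    qed
  qed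
  show ?thesis unfolding eq
    by (intro convex_Times convex_INT sublevel_convex superlevel_convex cx cc)
qed

theorem theorem3p4:
  fixes F :: "real^'n \<Rightarrow> real^'m \<Rightarrow> real"
    and Gx :: "real^'n \<Rightarrow> real^'m \<Rightarrow> real^'n"
    and Gy :: "real^'n \<Rightarrow> real^'m \<Rightarrow> real^'m"
    and Lx Ly Lxy t :: real
  assumes "Lx > 0" and "Ly > 0" and "Lxy \<ge> 0"
    and "in_class_F Lx Ly Lxy F Gx Gy"
    and "saddle_set F \<noteq> {}"
    and "t > 0"
    and "\<exists>\<alpha>::real. 0 \<le> \<alpha> \<and> \<alpha> < 1 \<and>
           (\<forall>x1 y1. (infdist (x1 - t *\<^sub>R Gx x1 y1, y1 + t *\<^sub>R Gy x1 y1) (saddle_set F))\<^sup>2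
                      \<le> \<alpha> * (infdist (x1, y1) (saddle_set F))\<^sup>2)"
  shows "\<exists>\<mu>>0. quadratic_gradient_growth F Gx Gy \<mu>"
proof -
  let ?S = "saddle_set F"
  obtain \<alpha> :: real where a0: "0 \<le> \<alpha>" and a1: "\<alpha> < 1" and
    conv: "\<And>x1 y1. (infdist (x1 - t *\<^sub>R Gx x1 y1, y1 + t *\<^sub>R Gy x1 y1) ?S)\<^sup>2
                      \<le> \<alpha> * (infdist (x1, y1) ?S)\<^sup>2"
    using assms(7) by blast
  have der: "\<And>x y. ((\<lambda>(u, v). F u v) has_derivative (\<lambda>(h, k). Gx x y \<bullet> h + Gy x y \<bullet> k)) (at (x, y))"
    using assms(4) unfolding in_class_F_def by blast
  have "continuous_on UNIV (\<lambda>(u, v). F u v)"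
    by (rule continuous_at_imp_continuous_on) (auto intro: has_derivative_continuous[OF der])
  hence "continuous_on UNIV (\<lambda>p. F (fst p) (snd p))"
    by (simp add: case_prod_beta')
  hence cl: "closed ?S" by (rule saddle_closed)
  note ne = assms(5)
  have cvx: "convex ?S"
    using assms(4) ne unfolding in_class_F_def by (intro saddle_convex) auto
  define \<mu> where "\<mu> = (1 - \<alpha>) / (2 * t)"
  have mu: "\<mu> > 0" unfolding \<mu>_def using a1 assms(6) by simp
  have "quadratic_gradient_growth F Gx Gy \<mu>"
    unfolding quadratic_gradient_growth_def
  proof (intro allI)
    fix x y
    obtain xs ys where cp: "closest_point ?S (x, y) = (xs, ys)" by (cases "closest_point ?S (x, y)")
    define z where "z = (x, y)"
    define p where "p = (xs, ys)"
    define w where "w = (t *\<^sub>R Gx x y, - (t *\<^sub>R Gy x y))"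
    have zp: "z - w = (x - t *\<^sub>R Gx x y, y + t *\<^sub>R Gy x y)" unfolding z_def w_def by simp
    have d: "infdist z ?S = norm (z - p)"
      using infdist_closest[OF cl ne, of "(x,y)"] cp unfolding z_def p_def by (simp add: dist_norm)
    define q where "q = closest_point ?S (z - w)"
    have dq: "infdist (z - w) ?S = norm (z - w - q)"
      using infdist_closest[OF cl ne, of "z - w"] unfolding q_def by (simp add: dist_norm)
    have qS: "q \<in> ?S" unfolding q_def by (rule closest_point_in_set[OF cl ne])
    have dot: "inner (z - p) (q - p) \<le> 0"
      using closest_point_dot[OF cvx cl qS, of z] cp unfolding z_def p_def by simp
    have "norm (z - w - q) ^ 2 = norm ((z - p) - (w + (q - p))) ^ 2"
      by (simp add: algebra_simps)
    also have "\<dots> = (norm (z - p))\<^sup>2 - 2 * inner (z - p) w - 2 * inner (z - p) (q - p) + (norm (w + (q - p)))\<^sup>2"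
      unfolding power2_norm_eq_inner
      by (simp add: inner_diff_left inner_diff_right inner_add_left inner_add_right inner_commute algebra_simps)
    finally have "(norm (z - p))\<^sup>2 - 2 * inner (z - p) w \<le> norm (z - w - q) ^ 2"
      using dot zero_le_power2[of "norm (w + (q - p))"] by linarith
    moreover have "norm (z - w - q) ^ 2 \<le> \<alpha> * (norm (z - p))\<^sup>2"
      using conv[of x y] zp d dq unfolding z_def by simp
    ultimately have C: "(1 - \<alpha>) * (norm (z - p))\<^sup>2 \<le> 2 * inner (z - p) w"
      by (simp add: algebra_simps)
    have iw: "inner (z - p) w = t * (Gx x y \<bullet> (x - xs) - Gy x y \<bullet> (y - ys))"
      unfolding z_def p_def w_def by (simp add: inner_commute algebra_simps)
    have "\<mu> * (infdist (x, y) ?S)\<^sup>2 \<le> Gx x y \<bullet> (x - xs) - Gy x y \<bullet> (y - ys)"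
    proof -
      have C2: "(1 - \<alpha>) * (infdist (x, y) ?S)\<^sup>2 \<le> 2 * t * (Gx x y \<bullet> (x - xs) - Gy x y \<bullet> (y - ys))"
        using C[unfolded iw, unfolded d[symmetric], unfolded z_def] assms(6) by (simp add: algebra_simps)
      show ?thesis using C2 assms(6) unfolding \<mu>_def by (simp add: field_simps)
    qed
    thus "let (xs', ys') = closest_point ?S (x, y)
          in \<mu> * (infdist (x, y) ?S)\<^sup>2 \<le> Gx x y \<bullet> (x - xs') - Gy x y \<bullet> (y - ys')"
      unfolding cp by simp
  qed
  thus ?thesis using mu by blast
qed

end
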